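(* Let $\Pi$ be a boolean (possibly recursive) Datalog query with propositional answer atom $\mathit{ans}$, and let $D=D^x\cup D^n$ be a relational instance partitioned into disjoint sets of exogenous tuples $D^x$ and endogenous tuples $D^n$, with $\Pi\cup D\models \mathit{ans}$. Let $\mathcal{AP}^c=\langle \Pi, D^x, D^n, \mathit{ans}\rangle$ be the associated Datalog abduction problem (extensional database $D^x$, hypotheses $D^n$, observation $\mathit{ans}$). Then a tuple $t\in D^n$ is an actual cause for $\mathit{ans}$ if and only if $t\in \mathit{Rel}(\mathcal{AP}^c)$.
   Context: A boolean Datalog query is a finite set $\Pi$ of positive Datalog rules containing a rule defining a propositional atom $\mathit{ans}$; the query is true on instance $D$ (written $\Pi\cup D\models\mathit{ans}$) if $\mathit{ans}$ belongs to the minimal model of $\Pi\cup D$. Database predicates of $D$ do not occur in rule heads. A tuple $\tau\in D^n$ is a counterfactual cause for $\mathit{ans}$ in an instance $D'$ if $\Pi\cup D'\models\mathit{ans}$ and $\Pi\cup (D'\smallsetminus\{\tau\})\not\models\mathit{ans}$; $\tau\in D^n$ is an actual cause for $\mathit{ans}$ if there is a contingency set $\Gamma\subseteq D^n$ such that $\tau$ is a counterfactual cause for $\mathit{ans}$ in $D\smallsetminus\Gamma$. For a Datalog abduction problem $\langle\Pi,E,\mathit{Hyp},\mathit{Obs}\rangle$, an abductive diagnosis is a subset-minimal $\Delta\subseteq\mathit{Hyp}$ with $\Pi\cup E\cup\Delta\models\mathit{Obs}$, and $\mathit{Rel}$ denotes the set of hypotheses belonging to at least one abductive diagnosis. *)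

theory Defs
  imports Main
begin

text \<open>Ground atoms (facts / tuples) are predicates applied to
  lists of constants.\<close>

datatype ('v, 'c) dterm = Var 'v | Const 'c

type_synonym ('p, 'v, 'c) atom = "'p \<times> ('v, 'c) dterm list"

type_synonym ('p, 'c) fact = "'p \<times> 'c list"

record ('p, 'v, 'c) rule =
  head :: "('p, 'v, 'c) atom"
  body :: "('p, 'v, 'c) atom list"

fun subst_term :: "('v \<Rightarrow> 'c) \<Rightarrow> ('v, 'c) dterm \<Rightarrow> 'c" where
  "subst_term \<sigma> (Var x) = \<sigma> x"
| "subst_term \<sigma> (Const c) = c"

definition ground_atom :: "('v \<Rightarrow> 'c) \<Rightarrow> ('p, 'v, 'c) atom \<Rightarrow> ('p, 'c) fact" where
  "ground_atom \<sigma> a = (fst a, map (subst_term \<sigma>) (snd a))"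

inductive_set minimal_model ::
  "('p, 'v, 'c) rule set \<Rightarrow> ('p, 'c) fact set \<Rightarrow> ('p, 'c) fact set"
  for \<Pi> :: "('p, 'v, 'c) rule set" and D :: "('p, 'c) fact set" where
  fact: "f \<in> D \<Longrightarrow> f \<in> minimal_model \<Pi> D"
| rule: "\<lbrakk> r \<in> \<Pi>; \<forall>b \<in> set (body r). ground_atom \<sigma> b \<in> minimal_model \<Pi> D \<rbrakk>
         \<Longrightarrow> ground_atom \<sigma> (head r) \<in> minimal_model \<Pi> D"

definition entails :: "('p, 'v, 'c) rule set \<Rightarrow> ('p, 'c) fact set \<Rightarrow> ('p, 'c) fact \<Rightarrow> bool" where
  "entails \<Pi> D a \<longleftrightarrow> a \<in> minimal_model \<Pi> D"

definition ans_atom :: "'p \<Rightarrow> ('p, 'c) fact" where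
  "ans_atom ans = (ans, [])"

definition boolean_query :: "('p, 'v, 'c) rule set \<Rightarrow> 'p \<Rightarrow> bool" where
  "boolean_query \<Pi> ans \<longleftrightarrow> finite \<Pi> \<and> (\<exists>r \<in> \<Pi>. head r = (ans, []))"

definition db_preds_not_in_heads :: "('p, 'v, 'c) rule set \<Rightarrow> ('p, 'c) fact set \<Rightarrow> bool" where
  "db_preds_not_in_heads \<Pi> D \<longleftrightarrow> (\<forall>f \<in> D. \<forall>r \<in> \<Pi>. fst (head r) \<noteq> fst f)"

definition counterfactual_cause ::
  "('p, 'v, 'c) rule set \<Rightarrow> 'p \<Rightarrow> ('p, 'c) fact set \<Rightarrow> ('p, 'c) fact \<Rightarrow> ('p, 'c) fact set \<Rightarrow> bool" where
  "counterfactual_cause \<Pi> ans Dn \<tau> D' \<longleftrightarrow>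
     \<tau> \<in> Dn \<and> entails \<Pi> D' (ans_atom ans) \<and> \<not> entails \<Pi> (D' - {\<tau>}) (ans_atom ans)"

definition actual_cause ::
  "('p, 'v, 'c) rule set \<Rightarrow> 'p \<Rightarrow> ('p, 'c) fact set \<Rightarrow> ('p, 'c) fact set \<Rightarrow> ('p, 'c) fact \<Rightarrow> bool" where
  "actual_cause \<Pi> ans D Dn \<tau> \<longleftrightarrow>
     \<tau> \<in> Dn \<and> (\<exists>\<Gamma>. \<Gamma> \<subseteq> Dn \<and> counterfactual_cause \<Pi> ans Dn \<tau> (D - \<Gamma>))"

definition abductive_diagnosis ::
  "('p, 'v, 'c) rule set \<Rightarrow> ('p, 'c) fact set \<Rightarrow> ('p, 'c) fact set \<Rightarrow> ('p, 'c) fact set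
   \<Rightarrow> ('p, 'c) fact set \<Rightarrow> bool" where
  "abductive_diagnosis \<Pi> E Hyp Obs \<Delta> \<longleftrightarrow>
     \<Delta> \<subseteq> Hyp \<and> (\<forall>ob \<in> Obs. entails \<Pi> (E \<union> \<Delta>) ob) \<and>
     (\<forall>\<Delta>'. \<Delta>' \<subset> \<Delta> \<longrightarrow> \<not> (\<forall>ob \<in> Obs. entails \<Pi> (E \<union> \<Delta>') ob))"

definition Rel ::
  "('p, 'v, 'c) rule set \<Rightarrow> ('p, 'c) fact set \<Rightarrow> ('p, 'c) fact set \<Rightarrow> ('p, 'c) fact set
   \<Rightarrow> ('p, 'c) fact set" where
  "Rel \<Pi> E Hyp Obs = {h. \<exists>\<Delta>. abductive_diagnosis \<Pi> E Hyp Obs \<Delta> \<and> h \<in> \<Delta>}"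

end

theory Submission
  imports Defs
begin

lemma mm_mono:
  assumes "x \<in> minimal_model \<Pi> D" "D \<subseteq> D'"
  shows "x \<in> minimal_model \<Pi> D'"
  using assms by (induction rule: minimal_model.induct) (auto intro: minimal_model.intros)

lemma ent_mono: "entails \<Pi> D a \<Longrightarrow> D \<subseteq> D' \<Longrightarrow> entails \<Pi> D' a"
  unfolding entails_def using mm_mono by blast

theorem proposition2:
  fixes \<Pi> :: "('p, 'v, 'c) rule set"
    and ans :: 'p
    and D Dx Dn :: "('p, 'c) fact set"
    and t :: "('p, 'c) fact"
  assumes "boolean_query \<Pi> ans"
    and "finite D"
    and "D = Dx \<union> Dn"
    and "Dx \<inter> Dn = {}"
    and "db_preds_not_in_heads \<Pi> D"
    and "entails \<Pi> D (ans_atom ans)"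
    and "t \<in> Dn"
  shows "actual_cause \<Pi> ans D Dn t \<longleftrightarrow> t \<in> Rel \<Pi> Dx Dn {ans_atom ans}"
proof
  assume "actual_cause \<Pi> ans D Dn t"
  then obtain \<Gamma> where G: "\<Gamma> \<subseteq> Dn" "entails \<Pi> (D - \<Gamma>) (ans_atom ans)"
    "\<not> entails \<Pi> (D - \<Gamma> - {t}) (ans_atom ans)"
    unfolding actual_cause_def counterfactual_cause_def by blast
  define S where "S = Dn - \<Gamma>"
  have DS: "D - \<Gamma> = Dx \<union> S" using assms(3,4) G(1) unfolding S_def by blast
  define P where "P = (\<lambda>X. X \<subseteq> S \<and> entails \<Pi> (Dx \<union> X) (ans_atom ans))"
  have "P S" using G DS unfolding P_def by simp
  then obtain \<Delta> where D1: "P \<Delta>" and D2: "\<forall>Y. P Y \<longrightarrow> card \<Delta> \<le> card Y"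
    using ex_has_least_nat[of P S card] by blast
  have finS: "finite S" using assms(2,3) unfolding S_def by auto
  have finD: "finite \<Delta>" using D1 finS unfolding P_def by (meson finite_subset)
  have diag: "abductive_diagnosis \<Pi> Dx Dn {ans_atom ans} \<Delta>"
    unfolding abductive_diagnosis_def
  proof (intro conjI allI impI)
    show "\<Delta> \<subseteq> Dn" using D1 unfolding P_def S_def by blast
    show "\<forall>ob\<in>{ans_atom ans}. entails \<Pi> (Dx \<union> \<Delta>) ob" using D1 unfolding P_def by simp
    fix \<Delta>' assume "\<Delta>' \<subset> \<Delta>"
    then have "card \<Delta>' < card \<Delta>" using finD by (simp add: psubset_card_mono)
    then have "\<not> P \<Delta>'" using D2 by force
    then show "\<not> (\<forall>ob\<in>{ans_atom ans}. entails \<Pi> (Dx \<union> \<Delta>') ob)"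
      using D1 \<open>\<Delta>' \<subset> \<Delta>\<close> unfolding P_def by auto
  qed
  have "t \<in> \<Delta>"
  proof (rule ccontr)
    assume "t \<notin> \<Delta>"
    then have "Dx \<union> \<Delta> \<subseteq> D - \<Gamma> - {t}" using D1 DS assms(3,4,7) unfolding P_def by blast
    then show False using D1 G(3) ent_mono unfolding P_def by blast
  qed
  then show "t \<in> Rel \<Pi> Dx Dn {ans_atom ans}" using diag unfolding Rel_def by blast
next
  assume "t \<in> Rel \<Pi> Dx Dn {ans_atom ans}"
  then obtain \<Delta> where d: "abductive_diagnosis \<Pi> Dx Dn {ans_atom ans} \<Delta>" "t \<in> \<Delta>"
    unfolding Rel_def by blast
  then have d1: "\<Delta> \<subseteq> Dn" "entails \<Pi> (Dx \<union> \<Delta>) (ans_atom ans)"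
    and d2: "\<not> entails \<Pi> (Dx \<union> (\<Delta> - {t})) (ans_atom ans)"
    unfolding abductive_diagnosis_def by auto
  have e1: "D - (Dn - \<Delta>) = Dx \<union> \<Delta>" using assms(3,4) d1 by blast
  have e2: "D - (Dn - \<Delta>) - {t} = Dx \<union> (\<Delta> - {t})" using assms(3,4,7) d1 by blast
  show "actual_cause \<Pi> ans D Dn t"
    unfolding actual_cause_def counterfactual_cause_def
    using assms(7) d1 d2 e1 e2 by (intro conjI exI[of _ "Dn - \<Delta>"]) auto
qed

end
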